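(* Let $G=(V,E)$ be a countable graph with uniformly bounded degrees, $\alpha\in[0,1)$, and let $\{N_t\}_{t\ge0}$ be the weakly reinforced Pólya urn process on $G$ with exponent $\alpha$, $X_t=N_t/t$. Then for every $e\in E$, $\mathbb P\big(\limsup_{t\to\infty}X_t(e)\le 2\big)=1$.
   Context: $E_v=\{e\in E: v\in e\}$. The process: $\{P_v\}_{v\in V}$ i.i.d. Poisson point processes on $[0,\infty)\times[0,1]$ with intensity 1; initially $N_0(e)=1$ for all $e$. With $\mathrm{pol}_{v,e}(N)=N(e)^\alpha/\sum_{e'\in E_v}N(e')^\alpha$ and an enumeration $E_v=\{e_1,\dots,e_{\deg(v)}\}$, at each atom $(t,u)$ of $P_v$ the weight of $e_i$ is increased by 1 if $u\in(\sum_{j<i}\mathrm{pol}_{v,e_j}(N_t),\sum_{j\le i}\mathrm{pol}_{v,e_j}(N_t)]$ (weights just before $t$); no other changes occur. *)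

theory Defs
  imports "HOL-Probability.Probability"
begin

definition edges_at :: "'v set set \<Rightarrow> 'v \<Rightarrow> 'v set set" where
  "edges_at E v = {e \<in> E. v \<in> e}"

definition countable_graph_bounded_degree :: "'v set \<Rightarrow> 'v set set \<Rightarrow> bool" where
  "countable_graph_bounded_degree V E \<longleftrightarrow>
     countable V \<and> (\<forall>e\<in>E. e \<subseteq> V \<and> card e = 2) \<and>
     (\<exists>D::nat. \<forall>v\<in>V. finite (edges_at E v) \<and> card (edges_at E v) \<le> D)"

definition edge_enumeration :: "'v set \<Rightarrow> 'v set set \<Rightarrow> ('v \<Rightarrow> nat \<Rightarrow> 'v set) \<Rightarrow> bool" where
  "edge_enumeration V E enum \<longleftrightarrow>
     (\<forall>v\<in>V. bij_betw (enum v) {..<card (edges_at E v)} (edges_at E v))"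

definition pol :: "real \<Rightarrow> 'v set set \<Rightarrow> ('v set \<Rightarrow> nat) \<Rightarrow> 'v \<Rightarrow> 'v set \<Rightarrow> real" where
  "pol \<alpha> E N v e = real (N e) powr \<alpha> / (\<Sum>e'\<in>edges_at E v. real (N e') powr \<alpha>)"

definition sel_interval ::
  "real \<Rightarrow> 'v set set \<Rightarrow> ('v \<Rightarrow> nat \<Rightarrow> 'v set) \<Rightarrow> ('v set \<Rightarrow> nat) \<Rightarrow> 'v \<Rightarrow> 'v set \<Rightarrow> real set" where
  "sel_interval \<alpha> E enum N v e =
     (let i = (THE i. i < card (edges_at E v) \<and> enum v i = e)
      in {(\<Sum>j<i. pol \<alpha> E N v (enum v j)) <.. (\<Sum>j<Suc i. pol \<alpha> E N v (enum v j))})"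

definition ppp_region :: "(real \<times> real) set" where
  "ppp_region = {0..} \<times> {0..1}"

text \<open>A family P of i.i.d. Poisson point processes with intensity 1 (Lebesgue measure) on
  [0,oo) x [0,1], indexed by V, each given by its random set of atoms P v \<omega>.
  Characterised by its finite-dimensional distributions: counts in Borel sets of finite
  measure are a.s. finite and Poisson distributed with mean the Lebesgue measure of the set,
  and counts in pairwise disjoint sets (for the same vertex) resp. for different vertices
  are (jointly) independent.\<close>

definition admissible_set :: "(real \<times> real) set \<Rightarrow> bool" where
  "admissible_set A \<longleftrightarrow> A \<in> sets lborel \<and> A \<subseteq> ppp_region \<and> emeasure lborel A < \<infinity>"

definition iid_poisson_point_processes ::
  "'a measure \<Rightarrow> 'v set \<Rightarrow> ('v \<Rightarrow> 'a \<Rightarrow> (real \<times> real) set) \<Rightarrow> bool" where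
  "iid_poisson_point_processes M V P \<longleftrightarrow>
     prob_space M \<and>
     (\<forall>v\<in>V. \<forall>\<omega>\<in>space M. P v \<omega> \<subseteq> ppp_region) \<and>
     (\<forall>v\<in>V. \<forall>A. admissible_set A \<longrightarrow>
        (AE \<omega> in M. finite (P v \<omega> \<inter> A)) \<and>
        (\<lambda>\<omega>. card (P v \<omega> \<inter> A)) \<in> measurable M (count_space UNIV) \<and>
        (\<forall>k::nat. measure M {\<omega>\<in>space M. card (P v \<omega> \<inter> A) = k}
                   = measure lborel A ^ k / fact k * exp (- measure lborel A))) \<and>
     (\<forall>K. finite K \<longrightarrow> K \<subseteq> V \<times> Collect admissible_set \<longrightarrow>
        (\<forall>(v,A)\<in>K. \<forall>(v',A')\<in>K. v = v' \<and> A \<noteq> A' \<longrightarrow> A \<inter> A' = {}) \<longrightarrow>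
        prob_space.indep_vars M (\<lambda>_. count_space UNIV) (\<lambda>(v,A) \<omega>. card (P v \<omega> \<inter> A)) K)"

text \<open>The weakly reinforced Polya urn process driven by P: almost surely, for all t >= 0 and
  all edges e, N_t(e) = 1 + number of atoms (s,u) of P_v, v an endpoint of e, with 0 < s <= t
  and u in the interval of e at v computed from the weights just before s (left limits).\<close>

definition wrpu_process ::
  "'a measure \<Rightarrow> real \<Rightarrow> 'v set set \<Rightarrow> ('v \<Rightarrow> nat \<Rightarrow> 'v set) \<Rightarrow>
   ('v \<Rightarrow> 'a \<Rightarrow> (real \<times> real) set) \<Rightarrow> (real \<Rightarrow> 'v set \<Rightarrow> 'a \<Rightarrow> nat) \<Rightarrow> bool" where
  "wrpu_process M \<alpha> E enum P N \<longleftrightarrow>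
     (AE \<omega> in M. \<forall>t\<ge>0. \<forall>e\<in>E.
        N t e \<omega> = 1 + card {(v, s, u). v \<in> e \<and> (s, u) \<in> P v \<omega> \<and> 0 < s \<and> s \<le> t \<and>
             u \<in> sel_interval \<alpha> E enum (\<lambda>e'. Lim (at_left s) (\<lambda>r. N r e' \<omega>)) v e})"

end

theory Submission
  imports Defs
begin

definition ppbox :: "real \<Rightarrow> (real \<times> real) set" where "ppbox t = {0<..t} \<times> {0..1}"

lemma ppbox_sets: "ppbox t \<in> sets lborel"
proof -
  have "ppbox t \<in> sets (borel \<Otimes>\<^sub>M borel)" unfolding ppbox_def by (intro pair_measureI) auto
  then show ?thesis by (subst (asm) borel_prod) simp
qed

lemma emeasure_ppbox: assumes "0 \<le> t" shows "emeasure lborel (ppbox t) = ennreal t"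
proof -
  have "emeasure lborel (ppbox t) = emeasure (lborel \<Otimes>\<^sub>M lborel) ({0<..t} \<times> {0..(1::real)})"
    by (simp add: ppbox_def lborel_prod)
  also have "\<dots> = emeasure lborel {0<..t} * emeasure lborel {0..(1::real)}"
    by (rule sigma_finite_measure.emeasure_pair_measure_Times) (auto intro: lborel.sigma_finite_measure_axioms)
  finally show ?thesis using assms by simp
qed

lemma admissible_ppbox: assumes "0 \<le> t" shows "admissible_set (ppbox t)" "measure lborel (ppbox t) = t"
  using emeasure_ppbox[OF assms] assms ppbox_sets
  by (auto simp: admissible_set_def ppbox_def ppp_region_def measure_def)


lemma poisson_tail:
  fixes X :: "'a \<Rightarrow> nat"
  assumes ps: "prob_space M" and meas: "X \<in> measurable M (count_space UNIV)"
    and pmf: "\<forall>k. measure M {\<omega>\<in>space M. X \<omega> = k} = l ^ k / fact k * exp (- l)"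
    and l: "0 \<le> l" and th: "1 \<le> \<theta>"
  shows "measure M {\<omega>\<in>space M. c < real (X \<omega>)} \<le> exp (l * (\<theta> - 1)) / \<theta> powr c"
proof -
  interpret prob_space M by (rule ps)
  define B where "B j = (if c < real j then {\<omega>\<in>space M. X \<omega> = j} else {})" for j
  have Bs: "B j \<in> sets M" for j
  proof -
    have "X -` {j} \<inter> space M \<in> sets M" by (rule measurable_sets[OF meas]) simp
    moreover have "X -` {j} \<inter> space M = {\<omega>\<in>space M. X \<omega> = j}" by auto
    ultimately show ?thesis by (simp add: B_def)
  qed
  have U: "(\<Union>j. B j) = {\<omega>\<in>space M. c < real (X \<omega>)}" by (auto simp: B_def)
  have d: "disjoint_family B" by (auto simp: disjoint_family_on_def B_def)
  have s1: "(\<lambda>j. measure M (B j)) sums measure M {\<omega>\<in>space M. c < real (X \<omega>)}"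
    using measure_UNION[of B M] Bs d U by (auto simp: emeasure_eq_measure)
  have s2: "(\<lambda>j. (\<theta> * l) ^ j / fact j * (exp (- l) / \<theta> powr c)) sums (exp (\<theta> * l) * (exp (- l) / \<theta> powr c))"
    using exp_converges[of "\<theta> * l"] by (intro sums_mult2) (simp add: divide_inverse mult.commute)
  have le: "measure M (B j) \<le> (\<theta> * l) ^ j / fact j * (exp (- l) / \<theta> powr c)" for j
  proof (cases "c < real j")
    case True
    have "\<theta> powr c \<le> \<theta> powr real j" using True th by (intro powr_mono) auto
    also have "\<dots> = \<theta> ^ j" using th by (simp add: powr_realpow)
    finally have tc: "\<theta> powr c \<le> \<theta> ^ j" .
    have pos: "0 < \<theta> powr c" using th by simp
    have "measure M (B j) = l ^ j / fact j * exp (- l)" using True pmf by (simp add: B_def)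
    also have "\<dots> = (l ^ j / fact j * exp (- l)) * 1" by simp
    also have "\<dots> \<le> (l ^ j / fact j * exp (- l)) * (\<theta> ^ j / \<theta> powr c)"
      using tc pos l by (intro mult_left_mono) (auto simp: field_simps)
    also have "\<dots> = (\<theta> * l) ^ j / fact j * (exp (- l) / \<theta> powr c)" by (simp add: power_mult_distrib)
    finally show ?thesis .
  next
    case False
    then show ?thesis using l th by (simp add: B_def)
  qed
  have "measure M {\<omega>\<in>space M. c < real (X \<omega>)} \<le> exp (\<theta> * l) * (exp (- l) / \<theta> powr c)"
    using sums_le[OF _ s1 s2] le by blast
  also have "\<dots> = exp (l * (\<theta> - 1)) / \<theta> powr c"
    by (simp add: exp_add[symmetric] algebra_simps)
  finally show ?thesis .
qed


lemma geom_bound: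
  fixes \<epsilon> :: real assumes e: "0 < \<epsilon>"
  defines "r \<equiv> exp \<epsilon> / (1 + \<epsilon>) powr (1 + 2 * \<epsilon>)"
  shows "0 < r" "r < 1" "exp (real n * (1 + \<epsilon> - 1)) / (1 + \<epsilon>) powr ((1 + 2 * \<epsilon>) * real n) = r ^ n"
proof -
  show "0 < r" using e by (simp add: r_def)
  have "ln (1 / (1 + \<epsilon>)) \<le> 1 / (1 + \<epsilon>) - 1" using e by (intro ln_le_minus_one) auto
  then have l1: "\<epsilon> / (1 + \<epsilon>) \<le> ln (1 + \<epsilon>)" using e by (simp add: ln_div field_simps)
  have "\<epsilon> < (1 + 2 * \<epsilon>) * (\<epsilon> / (1 + \<epsilon>))" using e by (simp add: field_simps power2_eq_square)
  also have "\<dots> \<le> (1 + 2 * \<epsilon>) * ln (1 + \<epsilon>)" using l1 e by (intro mult_left_mono) auto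
  finally have "exp \<epsilon> < exp ((1 + 2 * \<epsilon>) * ln (1 + \<epsilon>))" by simp
  also have "\<dots> = (1 + \<epsilon>) powr (1 + 2 * \<epsilon>)" using e by (simp add: powr_def)
  finally show "r < 1" using e by (simp add: r_def)
  have "(1 + \<epsilon>) powr ((1 + 2 * \<epsilon>) * real n) = ((1 + \<epsilon>) powr (1 + 2 * \<epsilon>)) powr real n"
    by (simp add: powr_powr)
  also have "\<dots> = ((1 + \<epsilon>) powr (1 + 2 * \<epsilon>)) ^ n" using e by (simp add: powr_realpow)
  finally show "exp (real n * (1 + \<epsilon> - 1)) / (1 + \<epsilon>) powr ((1 + 2 * \<epsilon>) * real n) = r ^ n"
    by (simp add: r_def exp_of_nat_mult power_divide)
qed

lemma iid_D:
  assumes "iid_poisson_point_processes M V P" "v \<in> V" "admissible_set A"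
  shows "AE \<omega> in M. finite (P v \<omega> \<inter> A)"
    "(\<lambda>\<omega>. card (P v \<omega> \<inter> A)) \<in> measurable M (count_space UNIV)"
    "\<forall>k::nat. measure M {\<omega>\<in>space M. card (P v \<omega> \<inter> A) = k}
                   = measure lborel A ^ k / fact k * exp (- measure lborel A)"
  using assms unfolding iid_poisson_point_processes_def by blast+

lemma vertex_bound:
  assumes iid: "iid_poisson_point_processes M V P" and v: "v \<in> V" and e: "0 < \<epsilon>"
  shows "AE \<omega> in M. eventually (\<lambda>n. real (card (P v \<omega> \<inter> ppbox (real n))) \<le> (1 + 2 * \<epsilon>) * real n) sequentially"
proof -
  have ps: "prob_space M" using iid by (simp add: iid_poisson_point_processes_def)
  interpret prob_space M by (rule ps)
  define X where "X n \<omega> = card (P v \<omega> \<inter> ppbox (real n))" for n \<omega>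
  have adm: "admissible_set (ppbox (real n))" "measure lborel (ppbox (real n)) = real n" for n :: nat
    using admissible_ppbox[of "real n"] by auto
  have meas: "X n \<in> measurable M (count_space UNIV)" for n
    using iid_D(2)[OF iid v adm(1)[of n]] unfolding X_def .
  have pmf: "\<forall>k. measure M {\<omega>\<in>space M. X n \<omega> = k} = real n ^ k / fact k * exp (- real n)" for n
    using iid_D(3)[OF iid v adm(1)[of n]] adm(2)[of n] unfolding X_def by simp
  define A where "A n = {\<omega>\<in>space M. (1 + 2 * \<epsilon>) * real n < real (X n \<omega>)}" for n
  have As: "A n \<in> sets M" for n
  proof -
    have "X n -` {k. (1 + 2 * \<epsilon>) * real n < real k} \<inter> space M \<in> sets M" by (rule measurable_sets[OF meas]) simp
    moreover have "X n -` {k. (1 + 2 * \<epsilon>) * real n < real k} \<inter> space M = A n" by (auto simp: A_def)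
    ultimately show ?thesis by simp
  qed
  define r where "r = exp \<epsilon> / (1 + \<epsilon>) powr (1 + 2 * \<epsilon>)"
  have r: "0 < r" "r < 1" "\<And>n. exp (real n * (1 + \<epsilon> - 1)) / (1 + \<epsilon>) powr ((1 + 2 * \<epsilon>) * real n) = r ^ n"
    using geom_bound[OF e] unfolding r_def by auto
  have bnd: "measure M (A n) \<le> r ^ n" for n
    using poisson_tail[OF ps meas pmf[of n], of "1 + \<epsilon>" "(1 + 2 * \<epsilon>) * real n"] e r(3)[of n]
    by (simp add: A_def)
  have sum: "summable (\<lambda>n. measure M (A n))"
    by (rule summable_comparison_test[of _ "\<lambda>n. r ^ n"]) (use bnd r in \<open>auto intro!: summable_geometric\<close>)
  have "AE \<omega> in M. eventually (\<lambda>n. \<omega> \<in> space M - A n) sequentially"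
    by (rule borel_cantelli_AE1) (auto simp: As sum emeasure_eq_measure)
  then show ?thesis
    by (rule AE_mp) (intro AE_I2 impI, elim eventually_mono, simp add: A_def X_def not_less)
qed

lemma vertex_finite:
  assumes iid: "iid_poisson_point_processes M V P" and v: "v \<in> V"
  shows "AE \<omega> in M. \<forall>n::nat. finite (P v \<omega> \<inter> ppbox (real n))"
proof -
  have adm: "admissible_set (ppbox (real n))" for n :: nat
    using admissible_ppbox[of "real n"] by auto
  show ?thesis unfolding AE_all_countable
    using iid_D(1)[OF iid v adm] by blast
qed


lemma det_bound:
  fixes f ca cb :: "real \<Rightarrow> nat"
  assumes N: "\<forall>t\<ge>0. real (f t) \<le> 1 + real (ca t) + real (cb t)"
    and mono: "\<forall>t n. 0 \<le> t \<longrightarrow> t \<le> real n \<longrightarrow> ca t \<le> ca (real n) \<and> cb t \<le> cb (real n)"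
    and ea: "\<forall>j. eventually (\<lambda>n. real (ca (real n)) \<le> (1 + 2 * (1 / real (Suc j))) * real n) sequentially"
    and eb: "\<forall>j. eventually (\<lambda>n. real (cb (real n)) \<le> (1 + 2 * (1 / real (Suc j))) * real n) sequentially"
  shows "Limsup at_top (\<lambda>t. ereal (real (f t) / t)) \<le> 2"
proof (rule ereal_le_epsilon2)
  fix \<delta> :: real assume d: "0 < \<delta>"
  obtain j0 :: nat where j0: "8 / \<delta> < real j0" using reals_Archimedean2 by metis
  define j where "j = j0"
  have j: "8 / \<delta> < real (Suc j)" using j0 unfolding j_def by simp
  define \<epsilon> where "\<epsilon> = 1 / real (Suc j)"
  have e0: "0 < \<epsilon>" "\<epsilon> \<le> 1" by (auto simp: \<epsilon>_def)
  have e1: "4 * \<epsilon> \<le> \<delta> / 2" using j d by (simp add: \<epsilon>_def field_simps)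
  obtain K where K: "\<And>n. n \<ge> K \<Longrightarrow> real (ca (real n)) \<le> (1 + 2 * \<epsilon>) * real n \<and> real (cb (real n)) \<le> (1 + 2 * \<epsilon>) * real n"
    using eventually_conj[OF spec[OF ea, of j] spec[OF eb, of j]]
    unfolding eventually_sequentially \<epsilon>_def by blast
  have ev: "eventually (\<lambda>t. ereal (real (f t) / t) \<le> ereal (2 + \<delta>)) at_top"
    unfolding eventually_at_top_linorder
  proof (intro exI allI impI)
    fix t :: real assume t: "t \<ge> max (real K) (max (14 / \<delta>) 1)"
    define n where "n = nat \<lceil>t\<rceil>"
    have t1: "1 \<le> t" "real K \<le> t" "14 / \<delta> \<le> t" using t by auto
    have tn: "t \<le> real n" "real n \<le> t + 1" using t1 unfolding n_def by linarith+
    have Kn: "K \<le> n" using t1 tn by linarith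
    have "real (ca t) \<le> real (ca (real n))" "real (cb t) \<le> real (cb (real n))"
      using mono[rule_format, of t n] tn t1 by auto
    have c: "real (ca t) \<le> (1 + 2 * \<epsilon>) * (t + 1)" "real (cb t) \<le> (1 + 2 * \<epsilon>) * (t + 1)"
    proof -
      have "(1 + 2 * \<epsilon>) * real n \<le> (1 + 2 * \<epsilon>) * (t + 1)" using tn e0 by (intro mult_left_mono) auto
      then show "real (ca t) \<le> (1 + 2 * \<epsilon>) * (t + 1)" "real (cb t) \<le> (1 + 2 * \<epsilon>) * (t + 1)"
        using K[OF Kn] \<open>real (ca t) \<le> real (ca (real n))\<close> \<open>real (cb t) \<le> real (cb (real n))\<close> by linarith+
    qed
    have ft: "real (f t) \<le> 1 + 2 * ((1 + 2 * \<epsilon>) * (t + 1))" using N[rule_format, of t] t1 c by linarith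
    have "1 + 2 * ((1 + 2 * \<epsilon>) * (t + 1)) = 2 * t + (4 * \<epsilon>) * t + (3 + 4 * \<epsilon>)" by (simp add: algebra_simps)
    also have "\<dots> \<le> 2 * t + (\<delta> / 2) * t + 7" using e0 e1 t1 by (intro add_mono mult_right_mono) auto
    also have "\<dots> \<le> 2 * t + (\<delta> / 2) * t + (\<delta> / 2) * t"
    proof -
      have "14 \<le> \<delta> * t" using t1 d by (simp add: field_simps)
      then show ?thesis by simp
    qed
    finally have "real (f t) \<le> (2 + \<delta>) * t" using ft by (simp add: algebra_simps)
    then have "real (f t) / t \<le> 2 + \<delta>" using t1 by (simp add: field_simps)
    then show "ereal (real (f t) / t) \<le> ereal (2 + \<delta>)" by simp
  qed
  have "Limsup at_top (\<lambda>t. ereal (real (f t) / t)) \<le> ereal (2 + \<delta>)" by (rule Limsup_bounded[OF ev])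
  then show "Limsup at_top (\<lambda>t. ereal (real (f t) / t)) \<le> 2 + ereal \<delta>" by simp
qed


lemma ppbox_mono: "t \<le> t' \<Longrightarrow> ppbox t \<subseteq> ppbox t'" by (auto simp: ppbox_def)

lemma count_le:
  assumes fa: "finite Qa" and fb: "finite Qb" and e: "e = {a, b}"
    and sub: "S \<subseteq> {(v, x). v \<in> e \<and> x \<in> (if v = a then Qa else Qb)}"
  shows "card S \<le> card Qa + card Qb"
proof -
  have "{(v, x). v \<in> e \<and> x \<in> (if v = a then Qa else Qb)} \<subseteq> Pair a ` Qa \<union> Pair b ` Qb"
    using e by (auto split: if_splits)
  with sub have sub2: "S \<subseteq> Pair a ` Qa \<union> Pair b ` Qb" by blast
  have "card S \<le> card (Pair a ` Qa \<union> Pair b ` Qb)" using fa fb by (intro card_mono[OF _ sub2]) auto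
  also have "\<dots> \<le> card (Pair a ` Qa) + card (Pair b ` Qb)" by (rule card_Un_le)
  also have "\<dots> \<le> card Qa + card Qb" using fa fb by (intro add_mono card_image_le)
  finally show ?thesis .
qed

theorem mainTheorem3:
  fixes M :: "'a measure" and V :: "'v set" and E :: "'v set set"
    and \<alpha> :: real and enum :: "'v \<Rightarrow> nat \<Rightarrow> 'v set"
    and P :: "'v \<Rightarrow> 'a \<Rightarrow> (real \<times> real) set"
    and N :: "real \<Rightarrow> 'v set \<Rightarrow> 'a \<Rightarrow> nat"
  assumes "countable_graph_bounded_degree V E"
    and "0 \<le> \<alpha>" and "\<alpha> < 1"
    and "edge_enumeration V E enum"
    and "iid_poisson_point_processes M V P"
    and "wrpu_process M \<alpha> E enum P N"
    and "e \<in> E"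
  shows "AE \<omega> in M. Limsup at_top (\<lambda>t. ereal (real (N t e \<omega>) / t)) \<le> 2"
proof -
  note iid = assms(5)
  have eV: "e \<subseteq> V" "card e = 2" using assms(1,7) unfolding countable_graph_bounded_degree_def by auto
  then obtain a b where ab: "e = {a, b}" "a \<noteq> b" by (meson card_2_iff)
  have aV: "a \<in> V" and bV: "b \<in> V" using eV ab by auto
  have ps: "prob_space M" using iid by (simp add: iid_poisson_point_processes_def)
  have reg: "\<forall>v\<in>V. \<forall>\<omega>\<in>space M. P v \<omega> \<subseteq> ppp_region" using iid by (simp add: iid_poisson_point_processes_def)
  have B: "AE \<omega> in M. \<forall>j. eventually (\<lambda>n. real (card (P v \<omega> \<inter> ppbox (real n))) \<le> (1 + 2 * (1 / real (Suc j))) * real n) sequentially"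
    if "v \<in> V" for v
    unfolding AE_all_countable by (intro allI vertex_bound[OF iid that]) simp
  have F: "AE \<omega> in M. \<forall>n::nat. finite (P v \<omega> \<inter> ppbox (real n))" if "v \<in> V" for v
    using vertex_finite[OF iid that] .
  have W: "AE \<omega> in M. \<forall>t\<ge>0. \<forall>e\<in>E.
        N t e \<omega> = 1 + card {(v, s, u). v \<in> e \<and> (s, u) \<in> P v \<omega> \<and> 0 < s \<and> s \<le> t \<and>
             u \<in> sel_interval \<alpha> E enum (\<lambda>e'. Lim (at_left s) (\<lambda>r. N r e' \<omega>)) v e}"
    using assms(6) unfolding wrpu_process_def .
  show ?thesis
    using AE_space B[OF aV] B[OF bV] F[OF aV] F[OF bV] W
  proof eventually_elim
    case (elim \<omega>)
    define ca where "ca t = card (P a \<omega> \<inter> ppbox t)" for t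
    define cb where "cb t = card (P b \<omega> \<inter> ppbox t)" for t
    have fin: "finite (P v \<omega> \<inter> ppbox t)" if "v \<in> {a, b}" "0 \<le> t" for v t
    proof -
      have "P v \<omega> \<inter> ppbox t \<subseteq> P v \<omega> \<inter> ppbox (real (nat \<lceil>t\<rceil>))" using ppbox_mono[of t "real (nat \<lceil>t\<rceil>)"] by (auto simp: real_nat_ceiling_ge)
      moreover have "\<forall>n::nat. finite (P v \<omega> \<inter> ppbox (real n))" using elim that by auto
      then have "finite (P v \<omega> \<inter> ppbox (real (nat \<lceil>t\<rceil>)))" by (rule spec)
      ultimately show ?thesis by (rule finite_subset)
    qed
    have mono: "\<forall>t n. 0 \<le> t \<longrightarrow> t \<le> real n \<longrightarrow> ca t \<le> ca (real n) \<and> cb t \<le> cb (real n)"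
    proof (intro allI impI conjI)
      fix t n assume t: "0 \<le> t" "t \<le> real n"
      have "P a \<omega> \<inter> ppbox t \<subseteq> P a \<omega> \<inter> ppbox (real n)" "P b \<omega> \<inter> ppbox t \<subseteq> P b \<omega> \<inter> ppbox (real n)"
        using ppbox_mono[OF t(2)] by auto
      then show "ca t \<le> ca (real n)" "cb t \<le> cb (real n)"
        unfolding ca_def cb_def using elim by (auto intro!: card_mono)
    qed
    have Nb: "\<forall>t\<ge>0. real (N t e \<omega>) \<le> 1 + real (ca t) + real (cb t)"
    proof (intro allI impI)
      fix t :: real assume t: "0 \<le> t"
      let ?S = "{(v, s, u). v \<in> e \<and> (s, u) \<in> P v \<omega> \<and> 0 < s \<and> s \<le> t \<and>
             u \<in> sel_interval \<alpha> E enum (\<lambda>e'. Lim (at_left s) (\<lambda>r. N r e' \<omega>)) v e}"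
      have Neq: "N t e \<omega> = 1 + card ?S" using elim t assms(7) by blast
      have sub: "?S \<subseteq> {(v, x). v \<in> e \<and> x \<in> (if v = a then P a \<omega> \<inter> ppbox t else P b \<omega> \<inter> ppbox t)}"
      proof
        fix x assume x: "x \<in> ?S"
        obtain v s u where xv: "x = (v, s, u)" by (cases x) auto
        have v: "v \<in> e" "(s, u) \<in> P v \<omega>" "0 < s" "s \<le> t" using x xv by auto
        have "v \<in> V" using v eV by auto
        then have "(s, u) \<in> ppp_region" using reg elim v by auto
        then have "(s, u) \<in> ppbox t" using v by (auto simp: ppp_region_def ppbox_def)
        then show "x \<in> {(v, x). v \<in> e \<and> x \<in> (if v = a then P a \<omega> \<inter> ppbox t else P b \<omega> \<inter> ppbox t)}"
          using v xv ab by auto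
      qed
      have "card ?S \<le> ca t + cb t"
        unfolding ca_def cb_def by (rule count_le[OF fin fin ab(1) sub]) (use t in auto)
      then show "real (N t e \<omega>) \<le> 1 + real (ca t) + real (cb t)" using Neq by simp
    qed
    have ea: "\<forall>j. eventually (\<lambda>n. real (ca (real n)) \<le> (1 + 2 * (1 / real (Suc j))) * real n) sequentially"
      using elim unfolding ca_def by blast
    have eb: "\<forall>j. eventually (\<lambda>n. real (cb (real n)) \<le> (1 + 2 * (1 / real (Suc j))) * real n) sequentially"
      using elim unfolding cb_def by blast
    show ?case by (rule det_bound[OF Nb mono ea eb])
  qed
qed

end
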